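(* Consider instances with two candidates $P,Q$. Let $\mathcal M$ be any deterministic mechanism which selects a winner among $\{P,Q\}$ using only the exact preference strengths of the voters (for each voter $i$: which of $P,Q$ it prefers, and the exact value of its preference strength). Then the worst-case distortion of $\mathcal M$ is at least $\sqrt{2}$; that is, for every $\varepsilon>0$ there is an instance on which the candidate selected by $\mathcal M$ has distortion at least $\sqrt{2}-\varepsilon$.
   Context: Voters $N=\{1,\dots,n\}$ and a finite set of candidates $\mathcal C$ are points of an arbitrary (unknown) metric space $(X,d)$. Voter $i$ prefers candidate $P$ to candidate $Q$ only if $d(i,P)\le d(i,Q)$, and the strength of this preference is $\alpha_i^{PQ}=d(i,Q)/d(i,P)\ge 1$. The social cost of a point $Y\in X$ is $SC(Y)=\sum_{i\in N}d(i,Y)$. If a mechanism selects winner $P_I$ on instance $I=(N,\mathcal C,d)$, the distortion of $P_I$ is $SC(P_I)/\min_{Z\in\mathcal C}SC(Z)$, and the (worst-case) distortion of the mechanism is the supremum of this ratio over all instances. *)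

theory Defs
  imports Complex_Main "HOL-Library.Extended_Real"
begin

definition metric_on :: "nat set \<Rightarrow> (nat \<Rightarrow> nat \<Rightarrow> real) \<Rightarrow> bool" where
  "metric_on S d \<longleftrightarrow>
     (\<forall>x\<in>S. \<forall>y\<in>S. d x y \<ge> 0 \<and> (d x y = 0 \<longleftrightarrow> x = y) \<and> d x y = d y x) \<and>
     (\<forall>x\<in>S. \<forall>y\<in>S. \<forall>z\<in>S. d x z \<le> d x y + d y z)"

text \<open>Preference strength of a voter with distance a to its preferred candidate and
  distance b to the other one: b / a, with b/0 = infinity (and 0/0 read as 1).\<close>
definition pref_strength :: "real \<Rightarrow> real \<Rightarrow> ereal" where
  "pref_strength a b = (if a = b then 1 else if a = 0 then \<infinity> else ereal (b / a))"

definition social_cost :: "nat \<Rightarrow> (nat \<Rightarrow> nat) \<Rightarrow> (nat \<Rightarrow> nat \<Rightarrow> real) \<Rightarrow> nat \<Rightarrow> real" where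
  "social_cost n v d y = (\<Sum>i<n. d (v i) y)"

text \<open>The information given to the mechanism: for each voter i (in order), whether it
  prefers P (True) or Q (False), and the exact strength of its preference.\<close>
definition strength_profile ::
  "nat \<Rightarrow> (nat \<Rightarrow> nat) \<Rightarrow> (nat \<Rightarrow> nat \<Rightarrow> real) \<Rightarrow> nat \<Rightarrow> nat \<Rightarrow> (nat \<Rightarrow> bool) \<Rightarrow> (bool \<times> ereal) list" where
  "strength_profile n v d p q pref =
     map (\<lambda>i. (pref i, if pref i then pref_strength (d (v i) p) (d (v i) q)
                                 else pref_strength (d (v i) q) (d (v i) p))) [0..<n]"

definition consistent_prefs ::
  "nat \<Rightarrow> (nat \<Rightarrow> nat) \<Rightarrow> (nat \<Rightarrow> nat \<Rightarrow> real) \<Rightarrow> nat \<Rightarrow> nat \<Rightarrow> (nat \<Rightarrow> bool) \<Rightarrow> bool" where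
  "consistent_prefs n v d p q pref \<longleftrightarrow>
     (\<forall>i<n. if pref i then d (v i) p \<le> d (v i) q else d (v i) q \<le> d (v i) p)"

end

theory Submission
  imports Defs
begin

lemma line_metric:
  fixes f :: "nat \<Rightarrow> real"
  assumes "inj_on f S"
  shows "metric_on S (\<lambda>x y. \<bar>f x - f y\<bar>)"
  using assms unfolding metric_on_def inj_on_def by auto

definition pA :: "nat \<Rightarrow> real" where
  "pA k = (if k = 0 then 0 else if k = 1 then 1 else if k = 2 then - sqrt 2 / 2 else sqrt 2 / 2)"
definition pB :: "nat \<Rightarrow> real" where
  "pB k = (if k = 0 then 0 else if k = 1 then 1 else if k = 2 then 1 - sqrt 2 / 2 else 1 + sqrt 2 / 2)"

lemma s_facts: "sqrt 2 * sqrt 2 = (2::real)" "sqrt (2::real) > 1.4" "sqrt (2::real) < 1.5"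
proof -
  show "sqrt 2 * sqrt 2 = (2::real)" by simp
  have "(1.4::real) = sqrt (1.4^2)" by simp
  also have "\<dots> < sqrt 2" by (intro real_sqrt_less_mono) (simp add: power2_eq_square)
  finally show "sqrt (2::real) > 1.4" .
  have "sqrt (2::real) < sqrt (1.5^2)" by (intro real_sqrt_less_mono) (simp add: power2_eq_square)
  then show "sqrt (2::real) < 1.5" by simp
qed

lemma two_set: "(\<lambda>i::nat. i + 2) ` {..<2} = {2,3}"
  by (auto simp: image_def lessThan_def)

lemma profiles_eq:
  "strength_profile 2 (\<lambda>i. i+2) (\<lambda>x y. \<bar>pA x - pA y\<bar>) 0 1 (\<lambda>i. i = 0)
   = strength_profile 2 (\<lambda>i. i+2) (\<lambda>x y. \<bar>pB x - pB y\<bar>) 0 1 (\<lambda>i. i = 0)"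
proof -
  let ?s = "sqrt (2::real)"
  have s: "?s * ?s = 2" "?s > 1.4" "?s < 1.5" using s_facts by auto
  have e1: "(1 + ?s/2) / (?s/2) = (?s/2) / (1 - ?s/2)"
    using s by (simp add: field_simps)
  show ?thesis
    unfolding strength_profile_def pref_strength_def pA_def pB_def
    using s e1 by (simp add: upt_rec numeral_2_eq_2 abs_if)
qed

theorem mainTheorem1:
  fixes M :: "(bool \<times> ereal) list \<Rightarrow> bool"
    and \<epsilon> :: real
  assumes "\<epsilon> > 0"
  shows "\<exists>(n::nat) (d::nat \<Rightarrow> nat \<Rightarrow> real) (v::nat \<Rightarrow> nat) (p::nat) (q::nat) (pref::nat \<Rightarrow> bool).
           n \<ge> 1 \<and> p \<noteq> q \<and>
           metric_on (insert p (insert q (v ` {..<n}))) d \<and>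
           consistent_prefs n v d p q pref \<and>
           (let w = (if M (strength_profile n v d p q pref) then p else q)
            in social_cost n v d w / min (social_cost n v d p) (social_cost n v d q)
                 \<ge> sqrt 2 - \<epsilon>)"
proof -
  let ?s = "sqrt (2::real)"
  have s: "?s * ?s = 2" "?s > 1.4" "?s < 1.5" using s_facts by auto
  have S: "insert 0 (insert 1 ((\<lambda>i::nat. i + 2) ` {..<2})) = {0,1,2,3}"
    using two_set by auto
  have injA: "inj_on pA {0,1,2,3}" using s unfolding inj_on_def pA_def by auto
  have injB: "inj_on pB {0,1,2,3}" using s unfolding inj_on_def pB_def by auto
  have cA: "consistent_prefs 2 (\<lambda>i. i+2) (\<lambda>x y. \<bar>pA x - pA y\<bar>) 0 1 (\<lambda>i. i = 0)"
    unfolding consistent_prefs_def pA_def using s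
    by (auto simp: less_2_cases_iff abs_if)
  have cB: "consistent_prefs 2 (\<lambda>i. i+2) (\<lambda>x y. \<bar>pB x - pB y\<bar>) 0 1 (\<lambda>i. i = 0)"
    unfolding consistent_prefs_def pB_def using s
    by (auto simp: less_2_cases_iff abs_if)
  have scA0: "social_cost 2 (\<lambda>i. i+2) (\<lambda>x y. \<bar>pA x - pA y\<bar>) 0 = ?s"
    unfolding social_cost_def pA_def using s by (simp add: numeral_2_eq_2 abs_if)
  have scA1: "social_cost 2 (\<lambda>i. i+2) (\<lambda>x y. \<bar>pA x - pA y\<bar>) 1 = 2"
    unfolding social_cost_def pA_def using s by (simp add: numeral_2_eq_2 abs_if)
  have scB0: "social_cost 2 (\<lambda>i. i+2) (\<lambda>x y. \<bar>pB x - pB y\<bar>) 0 = 2"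
    unfolding social_cost_def pB_def using s by (simp add: numeral_2_eq_2 abs_if)
  have scB1: "social_cost 2 (\<lambda>i. i+2) (\<lambda>x y. \<bar>pB x - pB y\<bar>) 1 = ?s"
    unfolding social_cost_def pB_def using s by (simp add: numeral_2_eq_2 abs_if)
  have r: "2 / ?s = ?s" using s by (simp add: field_simps)
  show ?thesis
  proof (cases "M (strength_profile 2 (\<lambda>i. i+2) (\<lambda>x y. \<bar>pA x - pA y\<bar>) 0 1 (\<lambda>i. i = 0))")
    case True
    show ?thesis
      apply (rule exI[of _ 2], rule exI[of _ "\<lambda>x y. \<bar>pB x - pB y\<bar>"], rule exI[of _ "\<lambda>i. i+2"],
             rule exI[of _ 0], rule exI[of _ 1], rule exI[of _ "\<lambda>i. i = 0"])
      using True profiles_eq cB line_metric[OF injB] S scB0 scB1 r s assms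
      by (simp add: Let_def min_def)
  next
    case False
    show ?thesis
      apply (rule exI[of _ 2], rule exI[of _ "\<lambda>x y. \<bar>pA x - pA y\<bar>"], rule exI[of _ "\<lambda>i. i+2"],
             rule exI[of _ 0], rule exI[of _ 1], rule exI[of _ "\<lambda>i. i = 0"])
      using False cA line_metric[OF injA] S scA0 scA1 r s assms
      by (simp add: Let_def min_def)
  qed
qed

end
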